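(* Let $r\ge 1$ be an integer and let $\mathbf{C_r}$ be the poset with ground set $[r]^3$ in which $(x_1,y_1,z_1)\le (x_2,y_2,z_2)$ if and only if $z_1\le z_2$ and ($y_1<y_2$ or ($y_1=y_2$ and $x_1=x_2$)). Then every subposet $S$ of $\mathbf{C_r}$ with $|S|\ge 4r^2$ has dimension at least $3$.
   Context: $[r]$ denotes $\{0,1,\ldots,r-1\}$. A subposet of a poset $P$ is a subset of its ground set with the order induced from $P$. The dimension of a poset $P$ is the least integer $d$ such that there are $d$ linear extensions of $P$ whose intersection is $P$. *)

theory Defs
  imports Main
begin

text \<open>A (finite) poset is given by a ground set S and an order relation P \<subseteq> S \<times> S
  (as a set of pairs, (a,b) \<in> P meaning a \<le> b).\<close>

definition linear_extension :: "'a set \<Rightarrow> 'a rel \<Rightarrow> 'a rel \<Rightarrow> bool" where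
  "linear_extension S P L \<longleftrightarrow> linear_order_on S L \<and> P \<subseteq> L"

definition realizer :: "'a set \<Rightarrow> 'a rel \<Rightarrow> 'a rel set \<Rightarrow> bool" where
  "realizer S P Ls \<longleftrightarrow> finite Ls \<and> (\<forall>L\<in>Ls. linear_extension S P L) \<and> (S \<times> S) \<inter> \<Inter> Ls = P"

definition poset_dim :: "'a set \<Rightarrow> 'a rel \<Rightarrow> nat" where
  "poset_dim S P = (LEAST d. \<exists>Ls. realizer S P Ls \<and> card Ls = d)"

definition C_ground :: "nat \<Rightarrow> (nat \<times> nat \<times> nat) set" where
  "C_ground r = {(x, y, z). x < r \<and> y < r \<and> z < r}"

definition C_le :: "nat \<Rightarrow> (nat \<times> nat \<times> nat) rel" where
  "C_le r = {((x1, y1, z1), (x2, y2, z2)).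
      (x1, y1, z1) \<in> C_ground r \<and> (x2, y2, z2) \<in> C_ground r \<and>
      z1 \<le> z2 \<and> (y1 < y2 \<or> (y1 = y2 \<and> x1 = x2))}"

definition subposet_rel :: "'a rel \<Rightarrow> 'a set \<Rightarrow> 'a rel" where
  "subposet_rel P S = P \<inter> (S \<times> S)"

end

theory Submission imports Defs "HOL-Library.Product_Lexorder" begin

lemma lin_key:
  fixes key :: "'a \<Rightarrow> 'b::linorder"
  assumes "inj_on key S"
  shows "linear_order_on S {(p,q). p\<in>S \<and> q\<in>S \<and> key p \<le> key q}"
  using assms unfolding linear_order_on_def partial_order_on_def preorder_on_def
    refl_on_def total_on_def trans_def antisym_def
  by (auto dest: inj_onD intro: order_trans antisym)

definition keyz :: "nat\<times>nat\<times>nat \<Rightarrow> nat\<times>nat\<times>nat" where "keyz p = (case p of (x,y,z) \<Rightarrow> (z,y,x))"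
definition keyy :: "nat\<times>nat\<times>nat \<Rightarrow> nat\<times>nat\<times>nat" where "keyy p = (case p of (x,y,z) \<Rightarrow> (y,x,z))"
definition keyw :: "nat\<times>nat\<times>nat \<Rightarrow> nat\<times>int\<times>nat" where "keyw p = (case p of (x,y,z) \<Rightarrow> (y,- int x,z))"

definition LK where "LK S key = {(p,q). p\<in>S \<and> q\<in>S \<and> key p \<le> key q}"

lemma realizer_exists:
  assumes "S \<subseteq> C_ground r"
  shows "\<exists>Ls. realizer S (subposet_rel (C_le r) S) Ls"
proof -
  let ?P = "subposet_rel (C_le r) S"
  have inj: "inj_on keyz S" "inj_on keyy S" "inj_on keyw S"
    by (auto simp: inj_on_def keyz_def keyy_def keyw_def)
  have ext: "?P \<subseteq> LK S keyz" "?P \<subseteq> LK S keyy" "?P \<subseteq> LK S keyw"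
    by (auto simp: subposet_rel_def C_le_def LK_def keyz_def keyy_def keyw_def)
  have eq: "(S \<times> S) \<inter> \<Inter>{LK S keyz, LK S keyy, LK S keyw} = ?P"
  proof
    show "?P \<subseteq> (S \<times> S) \<inter> \<Inter>{LK S keyz, LK S keyy, LK S keyw}"
      using ext by (auto simp: subposet_rel_def)
    show "(S \<times> S) \<inter> \<Inter>{LK S keyz, LK S keyy, LK S keyw} \<subseteq> ?P"
    proof (rule subsetI)
      fix pq assume h: "pq \<in> (S \<times> S) \<inter> \<Inter>{LK S keyz, LK S keyy, LK S keyw}"
      obtain x1 y1 z1 x2 y2 z2 where pq: "pq = ((x1,y1,z1),(x2,y2,z2))" by (metis prod.exhaust)
      from h pq have m: "(x1,y1,z1) \<in> S" "(x2,y2,z2) \<in> S" by auto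
      from h pq have "z1 \<le> z2 \<and> (y1 < y2 \<or> (y1 = y2 \<and> x1 = x2))"
        by (auto simp: LK_def keyz_def keyy_def keyw_def)
      then show "pq \<in> ?P" using m assms pq
        by (auto simp: subposet_rel_def C_le_def)
    qed
  qed
  have "realizer S ?P {LK S keyz, LK S keyy, LK S keyw}"
    unfolding realizer_def linear_extension_def using eq ext lin_key[OF inj(1)] lin_key[OF inj(2)] lin_key[OF inj(3)]
    by (auto simp: LK_def)
  then show ?thesis by blast
qed

lemma key2:
  assumes tot1: "\<forall>a\<in>S. \<forall>b\<in>S. (a,b)\<in>L1 \<or> (b,a)\<in>L1"
    and tot2: "\<forall>a\<in>S. \<forall>b\<in>S. (a,b)\<in>L2 \<or> (b,a)\<in>L2"
    and tr1: "trans L1" and tr2: "trans L2" and an1: "antisym L1"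
    and S: "t\<in>S" "li\<in>S" "lj\<in>S" "hi\<in>S" "hj\<in>S"
    and a1: "(li,t)\<in>L2" "(lj,t)\<in>L2" "(li,hi)\<in>L1" "(lj,hj)\<in>L1"
    and a2: "(hi,t)\<notin>L2" "(hj,t)\<notin>L2"
    and a3: "(li,hj)\<notin>L1 \<or> (li,hj)\<notin>L2" "(lj,hi)\<notin>L1 \<or> (lj,hi)\<notin>L2"
    and ne: "hi \<noteq> hj"
  shows False
proof -
  have "(t,hi)\<in>L2" "(t,hj)\<in>L2" using tot2 S a2 by auto
  then have "(li,hj)\<in>L2" "(lj,hi)\<in>L2" using a1 tr2 by (meson transD)+
  then have "(li,hj)\<notin>L1" "(lj,hi)\<notin>L1" using a3 by auto
  then have "(hj,li)\<in>L1" "(hi,lj)\<in>L1" using tot1 S by auto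
  then have "(hj,hi)\<in>L1" "(hi,hj)\<in>L1" using a1 tr1 by (meson transD)+
  then show False using an1 ne by (auto dest: antisymD)
qed

lemma key3:
  assumes tot1: "\<forall>a\<in>S. \<forall>b\<in>S. (a,b)\<in>L1 \<or> (b,a)\<in>L1"
    and tot2: "\<forall>a\<in>S. \<forall>b\<in>S. (a,b)\<in>L2 \<or> (b,a)\<in>L2"
    and tr1: "trans L1" and tr2: "trans L2" and an1: "antisym L1" and an2: "antisym L2"
    and S: "t\<in>S" "l0\<in>S" "l1\<in>S" "l2\<in>S" "h0\<in>S" "h1\<in>S" "h2\<in>S"
    and a1: "(l0,t)\<in>L1" "(l1,t)\<in>L1" "(l2,t)\<in>L1" "(l0,t)\<in>L2" "(l1,t)\<in>L2" "(l2,t)\<in>L2"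
    and a1': "(l0,h0)\<in>L1" "(l1,h1)\<in>L1" "(l2,h2)\<in>L1" "(l0,h0)\<in>L2" "(l1,h1)\<in>L2" "(l2,h2)\<in>L2"
    and a2: "(h0,t)\<notin>L1 \<or> (h0,t)\<notin>L2" "(h1,t)\<notin>L1 \<or> (h1,t)\<notin>L2" "(h2,t)\<notin>L1 \<or> (h2,t)\<notin>L2"
    and a3: "(l0,h1)\<notin>L1 \<or> (l0,h1)\<notin>L2" "(l0,h2)\<notin>L1 \<or> (l0,h2)\<notin>L2"
            "(l1,h0)\<notin>L1 \<or> (l1,h0)\<notin>L2" "(l1,h2)\<notin>L1 \<or> (l1,h2)\<notin>L2"
            "(l2,h0)\<notin>L1 \<or> (l2,h0)\<notin>L2" "(l2,h1)\<notin>L1 \<or> (l2,h1)\<notin>L2"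
    and ne: "h0 \<noteq> h1" "h0 \<noteq> h2" "h1 \<noteq> h2"
  shows False
proof -
  have A: False if "li\<in>S" "lj\<in>S" "hi\<in>S" "hj\<in>S" "(li,t)\<in>L2" "(lj,t)\<in>L2" "(li,hi)\<in>L1" "(lj,hj)\<in>L1"
     "(hi,t)\<notin>L2" "(hj,t)\<notin>L2" "(li,hj)\<notin>L1 \<or> (li,hj)\<notin>L2" "(lj,hi)\<notin>L1 \<or> (lj,hi)\<notin>L2" "hi \<noteq> hj"
     for li lj hi hj
    using key2[OF tot1 tot2 tr1 tr2 an1 S(1) that] .
  have B: False if "li\<in>S" "lj\<in>S" "hi\<in>S" "hj\<in>S" "(li,t)\<in>L1" "(lj,t)\<in>L1" "(li,hi)\<in>L2" "(lj,hj)\<in>L2"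
     "(hi,t)\<notin>L1" "(hj,t)\<notin>L1" "(li,hj)\<notin>L2 \<or> (li,hj)\<notin>L1" "(lj,hi)\<notin>L2 \<or> (lj,hi)\<notin>L1" "hi \<noteq> hj"
     for li lj hi hj
    using key2[OF tot2 tot1 tr2 tr1 an2 S(1) that] .
  show False
    using a2 apply (elim disjE)
    using A[of l0 l1 h0 h1] A[of l0 l2 h0 h2] A[of l1 l2 h1 h2]
      B[of l0 l1 h0 h1] B[of l0 l2 h0 h2] B[of l1 l2 h1 h2] S a1 a1' a3 ne
    by (auto simp: eq_commute[of h1 h0])
qed

definition XU :: "(nat\<times>nat\<times>nat) set \<Rightarrow> nat \<Rightarrow> nat \<Rightarrow> nat set" where
  "XU S y z = {x. \<exists>a b. (x,y,a)\<in>S \<and> (x,y,b)\<in>S \<and> a \<le> z \<and> z < b}"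
definition XD :: "(nat\<times>nat\<times>nat) set \<Rightarrow> nat \<Rightarrow> nat \<Rightarrow> nat set" where
  "XD S y z = {x. \<exists>a b. (x,y,a)\<in>S \<and> (x,y,b)\<in>S \<and> a < z \<and> z \<le> b}"
definition Up :: "(nat\<times>nat\<times>nat) set \<Rightarrow> nat \<Rightarrow> nat \<Rightarrow> bool" where
  "Up S y z = (\<exists>x' y'. y < y' \<and> (x',y',z)\<in>S)"
definition Dn :: "(nat\<times>nat\<times>nat) set \<Rightarrow> nat \<Rightarrow> nat \<Rightarrow> bool" where
  "Dn S y z = (\<exists>x' y'. y' < y \<and> (x',y',z)\<in>S)"

lemma card_le2: assumes "finite A" "card A \<le> 2" "A \<noteq> {}" shows "\<exists>a b. A = {a,b}"
proof -
  have "card A \<noteq> 0" using assms by auto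
  then have "card A = 1 \<or> card A = 2" using assms(2) by linarith
  then show ?thesis by (auto simp: card_1_singleton_iff card_2_iff)
qed

lemma two_lin:
  assumes R: "realizer S P Ls" and c: "card Ls \<le> 2" and ne: "Ls \<noteq> {}"
  obtains L1 L2 where "\<forall>a\<in>S. \<forall>b\<in>S. (a,b)\<in>L1 \<or> (b,a)\<in>L1"
    "\<forall>a\<in>S. \<forall>b\<in>S. (a,b)\<in>L2 \<or> (b,a)\<in>L2" "trans L1" "trans L2" "antisym L1" "antisym L2"
    "\<And>a b. (a,b)\<in>P \<Longrightarrow> (a,b)\<in>L1 \<and> (a,b)\<in>L2"
    "\<And>a b. a\<in>S \<Longrightarrow> b\<in>S \<Longrightarrow> (a,b)\<notin>P \<Longrightarrow> (a,b)\<notin>L1 \<or> (a,b)\<notin>L2"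
proof -
  from R have fin: "finite Ls" by (simp add: realizer_def)
  obtain L1 L2 where Ls: "Ls = {L1,L2}" using card_le2[OF fin c ne] by blast
  have lin: "linear_order_on S L1" "linear_order_on S L2" "P \<subseteq> L1" "P \<subseteq> L2"
    using R Ls by (auto simp: realizer_def linear_extension_def)
  have eq: "(S\<times>S) \<inter> (L1 \<inter> L2) = P" using R Ls by (simp add: realizer_def)
  have tot: "\<forall>a\<in>S. \<forall>b\<in>S. (a,b)\<in>L \<or> (b,a)\<in>L" if "linear_order_on S L" for L
    using that unfolding linear_order_on_def partial_order_on_def preorder_on_def refl_on_def total_on_def
    by metis
  show ?thesis
    apply (rule that[OF tot[OF lin(1)] tot[OF lin(2)]])
    using lin eq unfolding linear_order_on_def partial_order_on_def preorder_on_def by auto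
qed

lemma confA:
  assumes R: "realizer S (subposet_rel (C_le r) S) Ls" and c: "card Ls \<le> 2"
    and G: "S \<subseteq> C_ground r"
    and U: "Up S y z" and X: "x0 \<in> XU S y z" "x1 \<in> XU S y z" "x2 \<in> XU S y z"
    and d: "x0 \<noteq> x1" "x0 \<noteq> x2" "x1 \<noteq> x2"
  shows False
proof -
  let ?P = "subposet_rel (C_le r) S"
  obtain xt yt where t: "y < yt" "(xt,yt,z)\<in>S" using U by (auto simp: Up_def)
  obtain a0 b0 where 0: "(x0,y,a0)\<in>S" "(x0,y,b0)\<in>S" "a0 \<le> z" "z < b0" using X by (auto simp: XU_def)
  obtain a1 b1 where 1: "(x1,y,a1)\<in>S" "(x1,y,b1)\<in>S" "a1 \<le> z" "z < b1" using X by (auto simp: XU_def)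
  obtain a2 b2 where 2: "(x2,y,a2)\<in>S" "(x2,y,b2)\<in>S" "a2 \<le> z" "z < b2" using X by (auto simp: XU_def)
  have inS: "\<And>p. p \<in> S \<Longrightarrow> p \<in> C_ground r" using G by auto
  note gr = inS[OF t(2)] inS[OF 0(1)] inS[OF 0(2)] inS[OF 1(1)] inS[OF 1(2)] inS[OF 2(1)] inS[OF 2(2)]
  have inP: "((x0,y,a0),(xt,yt,z))\<in>?P" "((x1,y,a1),(xt,yt,z))\<in>?P" "((x2,y,a2),(xt,yt,z))\<in>?P"
     "((x0,y,a0),(x0,y,b0))\<in>?P" "((x1,y,a1),(x1,y,b1))\<in>?P" "((x2,y,a2),(x2,y,b2))\<in>?P"
    using t 0 1 2 gr by (auto simp: subposet_rel_def C_le_def)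
  have nP: "((x0,y,b0),(xt,yt,z))\<notin>?P" "((x1,y,b1),(xt,yt,z))\<notin>?P" "((x2,y,b2),(xt,yt,z))\<notin>?P"
     "((x0,y,a0),(x1,y,b1))\<notin>?P" "((x0,y,a0),(x2,y,b2))\<notin>?P"
     "((x1,y,a1),(x0,y,b0))\<notin>?P" "((x1,y,a1),(x2,y,b2))\<notin>?P"
     "((x2,y,a2),(x0,y,b0))\<notin>?P" "((x2,y,a2),(x1,y,b1))\<notin>?P"
    using t 0 1 2 d by (auto simp: subposet_rel_def C_le_def)
  show False
  proof (cases "Ls = {}")
    case True
    then have "(S\<times>S) = ?P" using R by (simp add: realizer_def)
    then show False using nP(1) 0 t by auto
  next
    case False
    obtain L1 L2 where L: "\<forall>a\<in>S. \<forall>b\<in>S. (a,b)\<in>L1 \<or> (b,a)\<in>L1"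
    "\<forall>a\<in>S. \<forall>b\<in>S. (a,b)\<in>L2 \<or> (b,a)\<in>L2" "trans L1" "trans L2" "antisym L1" "antisym L2"
    and i: "\<And>a b. (a,b)\<in>?P \<Longrightarrow> (a,b)\<in>L1 \<and> (a,b)\<in>L2"
    and n: "\<And>a b. a\<in>S \<Longrightarrow> b\<in>S \<Longrightarrow> (a,b)\<notin>?P \<Longrightarrow> (a,b)\<notin>L1 \<or> (a,b)\<notin>L2"
      using two_lin[OF R c False] by blast
    show False
      apply (rule key3[OF L t(2) 0(1) 1(1) 2(1) 0(2) 1(2) 2(2)])
      using i[OF inP(1)] i[OF inP(2)] i[OF inP(3)] i[OF inP(4)] i[OF inP(5)] i[OF inP(6)]
        n[OF _ _ nP(1)] n[OF _ _ nP(2)] n[OF _ _ nP(3)] n[OF _ _ nP(4)] n[OF _ _ nP(5)]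
        n[OF _ _ nP(6)] n[OF _ _ nP(7)] n[OF _ _ nP(8)] n[OF _ _ nP(9)] t 0 1 2 d
      by auto
  qed
qed

lemma confB:
  assumes R: "realizer S (subposet_rel (C_le r) S) Ls" and c: "card Ls \<le> 2"
    and G: "S \<subseteq> C_ground r"
    and U: "Dn S y z" and X: "x0 \<in> XD S y z" "x1 \<in> XD S y z" "x2 \<in> XD S y z"
    and d: "x0 \<noteq> x1" "x0 \<noteq> x2" "x1 \<noteq> x2"
  shows False
proof -
  let ?P = "subposet_rel (C_le r) S"
  obtain xt yt where t: "yt < y" "(xt,yt,z)\<in>S" using U by (auto simp: Dn_def)
  obtain a0 b0 where 0: "(x0,y,a0)\<in>S" "(x0,y,b0)\<in>S" "a0 < z" "z \<le> b0" using X by (auto simp: XD_def)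
  obtain a1 b1 where 1: "(x1,y,a1)\<in>S" "(x1,y,b1)\<in>S" "a1 < z" "z \<le> b1" using X by (auto simp: XD_def)
  obtain a2 b2 where 2: "(x2,y,a2)\<in>S" "(x2,y,b2)\<in>S" "a2 < z" "z \<le> b2" using X by (auto simp: XD_def)
  have inS: "\<And>p. p \<in> S \<Longrightarrow> p \<in> C_ground r" using G by auto
  note gr = inS[OF t(2)] inS[OF 0(1)] inS[OF 0(2)] inS[OF 1(1)] inS[OF 1(2)] inS[OF 2(1)] inS[OF 2(2)]
  have inP: "((xt,yt,z),(x0,y,b0))\<in>?P" "((xt,yt,z),(x1,y,b1))\<in>?P" "((xt,yt,z),(x2,y,b2))\<in>?P"
     "((x0,y,a0),(x0,y,b0))\<in>?P" "((x1,y,a1),(x1,y,b1))\<in>?P" "((x2,y,a2),(x2,y,b2))\<in>?P"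
    using t 0 1 2 gr by (auto simp: subposet_rel_def C_le_def)
  have nP: "((xt,yt,z),(x0,y,a0))\<notin>?P" "((xt,yt,z),(x1,y,a1))\<notin>?P" "((xt,yt,z),(x2,y,a2))\<notin>?P"
     "((x1,y,a1),(x0,y,b0))\<notin>?P" "((x2,y,a2),(x0,y,b0))\<notin>?P"
     "((x0,y,a0),(x1,y,b1))\<notin>?P" "((x2,y,a2),(x1,y,b1))\<notin>?P"
     "((x0,y,a0),(x2,y,b2))\<notin>?P" "((x1,y,a1),(x2,y,b2))\<notin>?P"
    using t 0 1 2 d by (auto simp: subposet_rel_def C_le_def)
  show False
  proof (cases "Ls = {}")
    case True
    then have "(S\<times>S) = ?P" using R by (simp add: realizer_def)
    then show False using nP(1) 0 t by auto
  next
    case False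
    obtain L1 L2 where L: "\<forall>a\<in>S. \<forall>b\<in>S. (a,b)\<in>L1 \<or> (b,a)\<in>L1"
    "\<forall>a\<in>S. \<forall>b\<in>S. (a,b)\<in>L2 \<or> (b,a)\<in>L2" "trans L1" "trans L2" "antisym L1" "antisym L2"
    and i: "\<And>a b. (a,b)\<in>?P \<Longrightarrow> (a,b)\<in>L1 \<and> (a,b)\<in>L2"
    and n: "\<And>a b. a\<in>S \<Longrightarrow> b\<in>S \<Longrightarrow> (a,b)\<notin>?P \<Longrightarrow> (a,b)\<notin>L1 \<or> (a,b)\<notin>L2"
      using two_lin[OF R c False] by blast
    have L': "\<forall>a\<in>S. \<forall>b\<in>S. (a,b)\<in>L1\<inverse> \<or> (b,a)\<in>L1\<inverse>"
    "\<forall>a\<in>S. \<forall>b\<in>S. (a,b)\<in>L2\<inverse> \<or> (b,a)\<in>L2\<inverse>" "trans (L1\<inverse>)" "trans (L2\<inverse>)" "antisym (L1\<inverse>)" "antisym (L2\<inverse>)"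
      using L by auto
    show False
      apply (rule key3[OF L' t(2) 0(2) 1(2) 2(2) 0(1) 1(1) 2(1)])
      using i[OF inP(1)] i[OF inP(2)] i[OF inP(3)] i[OF inP(4)] i[OF inP(5)] i[OF inP(6)]
        n[OF _ _ nP(1)] n[OF _ _ nP(2)] n[OF _ _ nP(3)] n[OF _ _ nP(4)] n[OF _ _ nP(5)]
        n[OF _ _ nP(6)] n[OF _ _ nP(7)] n[OF _ _ nP(8)] n[OF _ _ nP(9)] t 0 1 2 d
      by auto
  qed
qed

definition idx :: "nat set \<Rightarrow> nat \<Rightarrow> nat" where
  "idx X x = (if \<exists>x'<x. x'\<in>X then 1 else 0)"

lemma idx_le: "idx X x \<le> 1" by (simp add: idx_def)

lemma idx_three:
  assumes "x1 \<in> X" "x2 \<in> X" "x1 \<noteq> x2" "idx X x1 = idx X x2"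
  shows "\<exists>a b c. a\<in>X \<and> b\<in>X \<and> c\<in>X \<and> a\<noteq>b \<and> a\<noteq>c \<and> b\<noteq>c"
proof -
  have *: "\<exists>a b c. a\<in>X \<and> b\<in>X \<and> c\<in>X \<and> a\<noteq>b \<and> a\<noteq>c \<and> b\<noteq>c"
    if "u \<in> X" "v \<in> X" "u < v" "idx X u = idx X v" for u v
  proof -
    have "idx X v = 1" using that by (auto simp: idx_def)
    then have "idx X u = 1" using that by simp
    then have "\<exists>w<u. w\<in>X" unfolding idx_def by (metis zero_neq_one)
    then obtain w where "w < u" "w \<in> X" by blast
    then show ?thesis using that by (metis less_not_refl order.strict_trans)
  qed
  show ?thesis using assms *[of x1 x2] *[of x2 x1] by (metis linorder_neqE_nat)
qed

definition fS :: "nat \<Rightarrow> (nat\<times>nat\<times>nat) set \<Rightarrow> nat\<times>nat\<times>nat \<Rightarrow> nat\<times>nat" where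
"fS r S p = (case p of (x,y,z) \<Rightarrow>
   if \<not>(\<exists>a<z. (x,y,a)\<in>S) then (x,y)
   else if Dn S y z then (z, 2*r-1+2*y+idx (XD S y z) x)
   else if Up S y z then (if \<not>(\<exists>b>z. (x,y,b)\<in>S) then (x,r+y) else (z, 2*r-1+2*y+idx (XU S y z) x))
   else (z, 2*r-1+x))"

lemma fS_range:
  assumes G: "S \<subseteq> C_ground r" and p: "(x,y,z) \<in> S"
  shows "fS r S (x,y,z) \<in> {..<r} \<times> {..<4*r-1}"
proof -
  have g: "x < r" "y < r" "z < r" using G p by (auto simp: C_ground_def)
  have "Up S y z \<Longrightarrow> y + 1 < r"
    using G by (auto simp: Up_def C_ground_def)
  then show ?thesis using g idx_le[of "XD S y z" x] idx_le[of "XU S y z" x]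
    by (auto simp: fS_def)
qed

lemma other_level:
  assumes "(x1,y1,z)\<in>S" "(x2,y2,z)\<in>S" "y1 \<noteq> y2"
  shows "Dn S y1 z \<or> Up S y1 z"
proof (cases "y2 < y1")
  case True then show ?thesis using assms by (auto simp: Dn_def)
next
  case False then have "y1 < y2" using assms(3) by simp
  then show ?thesis using assms by (auto simp: Up_def)
qed

lemma fS_inj:
  assumes G: "S \<subseteq> C_ground r" and r: "r \<ge> 1"
    and noA: "\<And>y z x0 x1 x2. Up S y z \<Longrightarrow> x0 \<in> XU S y z \<Longrightarrow> x1 \<in> XU S y z \<Longrightarrow> x2 \<in> XU S y z
       \<Longrightarrow> x0 \<noteq> x1 \<Longrightarrow> x0 \<noteq> x2 \<Longrightarrow> x1 \<noteq> x2 \<Longrightarrow> False"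
    and noB: "\<And>y z x0 x1 x2. Dn S y z \<Longrightarrow> x0 \<in> XD S y z \<Longrightarrow> x1 \<in> XD S y z \<Longrightarrow> x2 \<in> XD S y z
       \<Longrightarrow> x0 \<noteq> x1 \<Longrightarrow> x0 \<noteq> x2 \<Longrightarrow> x1 \<noteq> x2 \<Longrightarrow> False"
  shows "inj_on (fS r S) S"
proof (rule inj_onI)
  fix p1 p2 assume p1: "p1 \<in> S" and p2: "p2 \<in> S" and eq: "fS r S p1 = fS r S p2"
  obtain x1 y1 z1 where P1: "p1 = (x1,y1,z1)" by (metis prod.exhaust)
  obtain x2 y2 z2 where P2: "p2 = (x2,y2,z2)" by (metis prod.exhaust)
  have s1: "(x1,y1,z1)\<in>S" and s2: "(x2,y2,z2)\<in>S" using p1 p2 P1 P2 by auto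
  have eq': "fS r S (x1,y1,z1) = fS r S (x2,y2,z2)" using eq P1 P2 by simp
  have ub: "Up S y z \<Longrightarrow> y + 1 < r" for y z
    using G by (auto simp: Up_def C_ground_def)
  have g: "x1 < r" "y1 < r" "z1 < r" "x2 < r" "y2 < r" "z2 < r" using G s1 s2 by (auto simp: C_ground_def)
  note i = idx_le[of "XD S y1 z1" x1] idx_le[of "XU S y1 z1" x1] idx_le[of "XD S y2 z2" x2] idx_le[of "XU S y2 z2" x2]
  define hb1 where "hb1 = (\<exists>a<z1. (x1,y1,a)\<in>S)"
  define hb2 where "hb2 = (\<exists>a<z2. (x2,y2,a)\<in>S)"
  define ha1 where "ha1 = (\<exists>b>z1. (x1,y1,b)\<in>S)"
  define ha2 where "ha2 = (\<exists>b>z2. (x2,y2,b)\<in>S)"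
  have bot: "(x1,y1,z1) = (x2,y2,z2)" if "\<not> hb1 \<or> \<not> hb2"
  proof -
    have "\<not> hb1 \<and> \<not> hb2"
      using that eq' r g i ub[of y1 z1] ub[of y2 z2] unfolding fS_def hb1_def hb2_def
      by (auto split: if_splits)
    then have "x1 = x2" "y1 = y2" using eq' unfolding fS_def hb1_def hb2_def by auto
    then show ?thesis using \<open>\<not> hb1 \<and> \<not> hb2\<close> s1 s2 unfolding hb1_def hb2_def
      by (metis linorder_neqE_nat)
  qed
  have top: "(x1,y1,z1) = (x2,y2,z2)" if "hb1" "hb2"
     "(\<not> Dn S y1 z1 \<and> Up S y1 z1 \<and> \<not> ha1) \<or> (\<not> Dn S y2 z2 \<and> Up S y2 z2 \<and> \<not> ha2)"
  proof -
    have "(\<not> Dn S y1 z1 \<and> Up S y1 z1 \<and> \<not> ha1) \<and> (\<not> Dn S y2 z2 \<and> Up S y2 z2 \<and> \<not> ha2)"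
      using that eq' r g i ub[of y1 z1] ub[of y2 z2] unfolding fS_def hb1_def hb2_def ha1_def ha2_def
      by (auto split: if_splits)
    then have e1: "fS r S (x1,y1,z1) = (x1, r+y1)" and e2: "fS r S (x2,y2,z2) = (x2, r+y2)"
      and "\<not> ha1" "\<not> ha2"
      using that unfolding fS_def hb1_def hb2_def ha1_def ha2_def by auto
    then have "x1 = x2" "y1 = y2" using eq' by auto
    then show ?thesis using s1 s2 \<open>\<not> ha1\<close> \<open>\<not> ha2\<close> unfolding ha1_def ha2_def
      by (metis linorder_neqE_nat)
  qed
  show "p1 = p2"
  proof (cases "hb1 \<and> hb2 \<and> \<not>((\<not> Dn S y1 z1 \<and> Up S y1 z1 \<and> \<not> ha1) \<or> (\<not> Dn S y2 z2 \<and> Up S y2 z2 \<and> \<not> ha2))")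
    case False
    then show ?thesis using bot top P1 P2 by blast
  next
    case True
    then have hb: "hb1" "hb2" and nt1: "\<not>(\<not> Dn S y1 z1 \<and> Up S y1 z1 \<and> \<not> ha1)"
      and nt2: "\<not>(\<not> Dn S y2 z2 \<and> Up S y2 z2 \<and> \<not> ha2)" by auto
    have f1: "fS r S (x1,y1,z1) = (z1, (if Dn S y1 z1 then 2*r-1+2*y1+idx (XD S y1 z1) x1
         else if Up S y1 z1 then 2*r-1+2*y1+idx (XU S y1 z1) x1 else 2*r-1+x1))"
      using hb nt1 unfolding fS_def hb1_def ha1_def by auto
    have f2: "fS r S (x2,y2,z2) = (z2, (if Dn S y2 z2 then 2*r-1+2*y2+idx (XD S y2 z2) x2
         else if Up S y2 z2 then 2*r-1+2*y2+idx (XU S y2 z2) x2 else 2*r-1+x2))"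
      using hb nt2 unfolding fS_def hb2_def ha2_def by auto
    have zz: "z1 = z2" using eq' f1 f2 by simp
    show ?thesis
    proof (cases "y1 = y2")
      case False
      have o: "Dn S y1 z1 \<or> Up S y1 z1" "Dn S y2 z1 \<or> Up S y2 z1"
        using other_level[OF s1 s2[unfolded zz[symmetric]] False]
          other_level[OF s2[unfolded zz[symmetric]] s1] False by auto
      have "2*y1 + (if Dn S y1 z1 then idx (XD S y1 z1) x1 else idx (XU S y1 z1) x1) =
            2*y2 + (if Dn S y2 z1 then idx (XD S y2 z1) x2 else idx (XU S y2 z1) x2)"
        using eq' f1 f2 zz o r by (auto split: if_splits)
      then have "y1 = y2" using i zz by (auto split: if_splits)
      then show ?thesis using False by simp
    next
      case True
      note yy = True
      show ?thesis
      proof (cases "x1 = x2")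
        case True then show ?thesis using P1 P2 yy zz by simp
      next
        case False
        show ?thesis
        proof (cases "Dn S y1 z1")
          case True
          have "idx (XD S y1 z1) x1 = idx (XD S y1 z1) x2" using eq' f1 f2 zz yy True by simp
          moreover have "x1 \<in> XD S y1 z1" "x2 \<in> XD S y1 z1"
            using hb s1 s2 zz yy unfolding hb1_def hb2_def XD_def by auto
          ultimately show ?thesis using idx_three False noB True by metis
        next
          case nD: False
          show ?thesis
          proof (cases "Up S y1 z1")
            case True
            have "idx (XU S y1 z1) x1 = idx (XU S y1 z1) x2" using eq' f1 f2 zz yy True nD by simp
            moreover have "x1 \<in> XU S y1 z1" "x2 \<in> XU S y1 z1"
              using hb nt1 nt2 True nD s1 s2 zz yy unfolding hb1_def hb2_def ha1_def ha2_def XU_def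
              by (auto intro: less_imp_le)
            ultimately show ?thesis using idx_three False noA True by metis
          next
            case False
            then have "x1 = x2" using eq' f1 f2 zz yy nD by simp
            then show ?thesis using \<open>x1 \<noteq> x2\<close> by simp
          qed
        qed
      qed
    qed
  qed
qed

lemma count:
  assumes G: "S \<subseteq> C_ground r" and r: "r \<ge> 1"
    and noA: "\<And>y z x0 x1 x2. Up S y z \<Longrightarrow> x0 \<in> XU S y z \<Longrightarrow> x1 \<in> XU S y z \<Longrightarrow> x2 \<in> XU S y z
       \<Longrightarrow> x0 \<noteq> x1 \<Longrightarrow> x0 \<noteq> x2 \<Longrightarrow> x1 \<noteq> x2 \<Longrightarrow> False"
    and noB: "\<And>y z x0 x1 x2. Dn S y z \<Longrightarrow> x0 \<in> XD S y z \<Longrightarrow> x1 \<in> XD S y z \<Longrightarrow> x2 \<in> XD S y z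
       \<Longrightarrow> x0 \<noteq> x1 \<Longrightarrow> x0 \<noteq> x2 \<Longrightarrow> x1 \<noteq> x2 \<Longrightarrow> False"
  shows "card S < 4 * r^2"
proof -
  have inj: "inj_on (fS r S) S" using fS_inj[OF G r noA noB] .
  have sub: "fS r S ` S \<subseteq> {..<r} \<times> {..<4*r-1}"
  proof
    fix q assume "q \<in> fS r S ` S"
    then obtain p where p: "p \<in> S" "q = fS r S p" by auto
    obtain x y z where "p = (x,y,z)" by (metis prod.exhaust)
    then show "q \<in> {..<r} \<times> {..<4*r-1}" using fS_range[OF G, of x y z] p by simp
  qed
  have "card S = card (fS r S ` S)" using inj by (simp add: card_image)
  also have "\<dots> \<le> card ({..<r} \<times> {..<4*r-1})" by (rule card_mono[OF _ sub]) auto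
  also have "\<dots> = r * (4*r-1)" by (simp add: card_cartesian_product)
  also have "\<dots> < 4 * r^2" using r by (simp add: power2_eq_square algebra_simps)
  finally show ?thesis .
qed
theorem mainTheorem2:
  fixes r :: nat and S :: "(nat \<times> nat \<times> nat) set"
  assumes "r \<ge> 1"
    and "S \<subseteq> C_ground r"
    and "card S \<ge> 4 * r ^ 2"
  shows "poset_dim S (subposet_rel (C_le r) S) \<ge> 3"
proof -
  let ?P = "subposet_rel (C_le r) S"
  have ex: "\<exists>d Ls. realizer S ?P Ls \<and> card Ls = d" using realizer_exists[OF assms(2)] by blast
  obtain Ls where R: "realizer S ?P Ls" and c: "card Ls = poset_dim S ?P"
    using LeastI_ex[OF ex] unfolding poset_dim_def by blast
  show ?thesis
  proof (rule ccontr)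
    assume "\<not> 3 \<le> poset_dim S ?P"
    then have c2: "card Ls \<le> 2" using c by simp
    have "card S < 4 * r^2"
      by (rule count[OF assms(2) assms(1)])
        (metis confA[OF R c2 assms(2)], metis confB[OF R c2 assms(2)])
    then show False using assms(3) by simp
  qed
qed

end
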